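(* Let $W=\langle s,t: s^2=t^2=(st)^m=1\rangle$ be a Coxeter group of rank $2$ with $m\ge2$ the order of $st$. Then the element $a_sa_t$ generates the top (degree $2$) component of the Orlik–Solomon algebra $A(W)$ as a right $\mathbb CW$-module.
   Context: $W$ acts as a reflection group on $\mathbb C^2$; $T$ is its set of reflections and $H_t$ the reflecting hyperplane of $t\in T$. $A(W)$ is the $\mathbb C$-algebra generated by $a_t$ ($t\in T$) subject to $a_ta_{t'}=-a_{t'}a_t$ and $\sum_{i=1}^p(-1)^ia_{t_1}\cdots\widehat{a_{t_i}}\cdots a_{t_p}=0$ whenever $\{H_{t_1},\dots,H_{t_p}\}$ is linearly dependent; $W$ acts by $a_t.w=a_{w^{-1}tw}$ extended to algebra automorphisms. The degree $2$ component is spanned by products $a_{t}a_{t'}$ with $H_t\ne H_{t'}$. *)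

theory Defs
  imports "HOL-Analysis.Analysis"
begin

type_synonym cmat = "complex^2^2"
type_synonym cvec = "complex^2"

text \<open>Geometric realisation of the rank-2 Coxeter group I_2(m) acting on C^2:
  s = reflection in the line at angle 0, t = reflection in the line at angle pi/m.\<close>

definition refl_s :: cmat where
  "refl_s = (\<chi> i j. if i = j then (if i = 1 then 1 else -1) else 0)"

definition refl_t :: "nat \<Rightarrow> cmat" where
  "refl_t m = (\<chi> i j. if i = 1 \<and> j = 1 then complex_of_real (cos (2 * pi / real m))
      else if i = 2 \<and> j = 2 then - complex_of_real (cos (2 * pi / real m))
      else complex_of_real (sin (2 * pi / real m)))"

text \<open>The group W generated by s and t (both are involutions, so the
  generated monoid is the generated group).\<close>
inductive_set coxW :: "nat \<Rightarrow> cmat set" for m :: nat where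
  one: "mat 1 \<in> coxW m"
| S: "w \<in> coxW m \<Longrightarrow> refl_s ** w \<in> coxW m"
| T: "w \<in> coxW m \<Longrightarrow> refl_t m ** w \<in> coxW m"

definition form_ker :: "cvec \<Rightarrow> cvec set" where
  "form_ker a = {v. (\<Sum>j\<in>UNIV. a $ j * v $ j) = 0}"

definition fixspace :: "cmat \<Rightarrow> cvec set" where
  "fixspace g = {v. g *v v = v}"

definition is_reflection :: "cmat \<Rightarrow> bool" where
  "is_reflection g \<longleftrightarrow> (\<exists>a. a \<noteq> 0 \<and> fixspace g = form_ker a)"

definition reflections :: "nat \<Rightarrow> cmat set" where
  "reflections m = {g \<in> coxW m. is_reflection g}"

definition hyps_dependent :: "cvec set list \<Rightarrow> bool" where
  "hyps_dependent Hs \<longleftrightarrow> (\<exists>a c.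
      (\<forall>i<length Hs. a i \<noteq> 0 \<and> Hs ! i = form_ker (a i)) \<and>
      (\<exists>i<length Hs. c i \<noteq> 0) \<and> (\<Sum>i<length Hs. c i *s a i) = 0)"

text \<open>Free associative algebra on the symbols a_t: elements are coefficient
  functions on words (lists of reflections).\<close>
definition wd :: "cmat list \<Rightarrow> cmat list \<Rightarrow> complex" where
  "wd u = (\<lambda>x. if x = u then 1 else 0)"

text \<open>Two-sided multiplication u * f * v by words u, v.\<close>
definition wmul :: "cmat list \<Rightarrow> (cmat list \<Rightarrow> complex) \<Rightarrow> cmat list \<Rightarrow> cmat list \<Rightarrow> complex" where
  "wmul u f v = (\<lambda>x. if length u + length v \<le> length x \<and> take (length u) x = u
      \<and> drop (length x - length v) x = v
      then f (take (length x - length u - length v) (drop (length u) x)) else 0)"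

definition os_rel :: "cmat list \<Rightarrow> cmat list \<Rightarrow> complex" where
  "os_rel ts = (\<lambda>x. \<Sum>i<length ts. (-1) ^ (i + 1) * wd (take i ts @ drop (Suc i) ts) x)"

definition cspan :: "(cmat list \<Rightarrow> complex) set \<Rightarrow> (cmat list \<Rightarrow> complex) set" where
  "cspan S = {f. \<exists>F c. finite F \<and> F \<subseteq> S \<and> f = (\<lambda>x. \<Sum>g\<in>F. c g * g x)}"

definition OS_gens :: "nat \<Rightarrow> (cmat list \<Rightarrow> complex) set" where
  "OS_gens m =
     {(\<lambda>x. wd [t, t'] x + wd [t', t] x) | t t'. t \<in> reflections m \<and> t' \<in> reflections m}
   \<union> {os_rel ts | ts. set ts \<subseteq> reflections m \<and> hyps_dependent (map fixspace ts)}"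

text \<open>The two-sided ideal of the free algebra generated by the OS relations;
  A(W) is the free algebra modulo this ideal.\<close>
definition OS_ideal :: "nat \<Rightarrow> (cmat list \<Rightarrow> complex) set" where
  "OS_ideal m = cspan {wmul u r v | u r v. u \<in> lists (reflections m) \<and>
      v \<in> lists (reflections m) \<and> r \<in> OS_gens m}"

end

theory Submission imports Defs begin

definition Rf :: "real \<Rightarrow> cmat" where
  "Rf a = (\<chi> i j. if i = 1 \<and> j = 1 then complex_of_real (cos a)
      else if i = 2 \<and> j = 2 then - complex_of_real (cos a) else complex_of_real (sin a))"
definition Ro :: "real \<Rightarrow> cmat" where
  "Ro a = (\<chi> i j. if i = j then complex_of_real (cos a)
      else if i = 1 then - complex_of_real (sin a) else complex_of_real (sin a))"

lemma two_ne_one: "(2::2) \<noteq> 1" by simp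

lemma RR: "Rf a ** Rf b = Ro (a - b)"
  unfolding Rf_def Ro_def
  by (simp add: vec_eq_iff forall_2 matrix_matrix_mult_def sum_2 cos_diff sin_diff)

lemma RRo: "Rf a ** Ro b = Rf (a - b)"
  unfolding Rf_def Ro_def
  by (simp add: vec_eq_iff forall_2 matrix_matrix_mult_def sum_2 cos_diff sin_diff)

lemma RoR: "Ro a ** Rf b = Rf (a + b)"
  unfolding Rf_def Ro_def
  by (simp add: vec_eq_iff forall_2 matrix_matrix_mult_def sum_2 cos_add sin_add)

lemma RoRo: "Ro a ** Ro b = Ro (a + b)"
  unfolding Rf_def Ro_def
  by (simp add: vec_eq_iff forall_2 matrix_matrix_mult_def sum_2 cos_add sin_add)

lemma Ro0: "Ro 0 = mat 1"
  unfolding Ro_def by (simp add: vec_eq_iff forall_2 mat_def)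

lemma s_eq: "refl_s = Rf 0"
  unfolding Rf_def refl_s_def by (simp add: vec_eq_iff forall_2)

lemma t_eq: "refl_t m = Rf (2 * pi / real m)"
  unfolding Rf_def refl_t_def by (simp add: vec_eq_iff forall_2)


definition ang :: "nat \<Rightarrow> int \<Rightarrow> real" where
  "ang m k = 2 * pi * real_of_int k / real m"

lemma ang_add: "ang m (a + b) = ang m a + ang m b"
  by (simp add: ang_def add_divide_distrib algebra_simps)
lemma ang_diff: "ang m (a - b) = ang m a - ang m b"
  by (simp add: ang_def diff_divide_distrib algebra_simps)
lemma ang_uminus: "ang m (- a) = - ang m a"
  by (simp add: ang_def)
lemma ang_lin: "ang m k = of_int k * ang m 1"
  by (simp add: ang_def)
lemma ang_0: "ang m 0 = 0" by (simp add: ang_def)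
lemma ang_1: "ang m 1 = 2 * pi / real m" by (simp add: ang_def)

lemma coxW_class: "w \<in> coxW m \<Longrightarrow> \<exists>k. w = Ro (ang m k) \<or> w = Rf (ang m k)"
proof (induction rule: coxW.induct)
  case one
  then show ?case using Ro0 ang_0 by metis
next
  case (S w)
  then obtain k where "w = Ro (ang m k) \<or> w = Rf (ang m k)" by blast
  then show ?case
  proof
    assume "w = Ro (ang m k)"
    then have "refl_s ** w = Rf (ang m (0 - k))" by (simp add: s_eq RRo ang_diff ang_0 ang_uminus)
    then show ?thesis by blast
  next
    assume "w = Rf (ang m k)"
    then have "refl_s ** w = Ro (ang m (0 - k))" by (simp add: s_eq RR ang_diff ang_0 ang_uminus)
    then show ?thesis by blast
  qed
next
  case (T w)
  then obtain k where "w = Ro (ang m k) \<or> w = Rf (ang m k)" by blast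
  then show ?case
  proof
    assume "w = Ro (ang m k)"
    then have "refl_t m ** w = Rf (ang m (1 - k))" by (simp add: t_eq RRo ang_diff ang_1)
    then show ?thesis by blast
  next
    assume "w = Rf (ang m k)"
    then have "refl_t m ** w = Ro (ang m (1 - k))" by (simp add: t_eq RR ang_diff ang_1)
    then show ?thesis by blast
  qed
qed

lemma coxW_mult: "x \<in> coxW m \<Longrightarrow> w \<in> coxW m \<Longrightarrow> x ** w \<in> coxW m"
proof (induction x rule: coxW.induct)
  case one then show ?case by (simp add: matrix_mul_lid)
next
  case (S x) then show ?case using coxW.S by (metis matrix_mul_assoc)
next
  case (T x) then show ?case using coxW.T by (metis matrix_mul_assoc)
qed

lemma s_in: "refl_s \<in> coxW m"
  using coxW.S[OF coxW.one] by (simp add: matrix_mul_rid)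
lemma t_in: "refl_t m \<in> coxW m"
  using coxW.T[OF coxW.one] by (simp add: matrix_mul_rid)

lemma Ro_in: "Ro (ang m k) \<in> coxW m"
proof (induction k rule: int_induct[where k = 0])
  case base then show ?case by (simp add: ang_0 Ro0 coxW.one)
next
  case (step1 i)
  have "Ro (ang m (i + 1)) = (refl_t m ** refl_s) ** Ro (ang m i)"
    by (simp add: t_eq s_eq RR RoRo ang_add ang_1 algebra_simps)
  then show ?case using step1 coxW_mult coxW.S coxW.T by (metis matrix_mul_assoc s_in t_in)
next
  case (step2 i)
  have "Ro (ang m (i - 1)) = (refl_s ** refl_t m) ** Ro (ang m i)"
    by (simp add: t_eq s_eq RR RoRo ang_diff ang_1 algebra_simps)
  then show ?case using step2 coxW_mult by (metis s_in t_in)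
qed

lemma Rf_in: "Rf (ang m k) \<in> coxW m"
proof -
  have "Rf (ang m k) = refl_s ** Ro (ang m (0 - k))"
    by (simp add: s_eq RRo ang_diff ang_0 ang_uminus)
  then show ?thesis using coxW.S Ro_in by metis
qed


lemma vec2_eq: "(v::cvec) = w \<longleftrightarrow> v $ 1 = w $ 1 \<and> v $ 2 = w $ 2"
  by (simp add: vec_eq_iff forall_2)

lemma Rf_mv: "(Rf a *v v) $ 1 = complex_of_real (cos a) * v$1 + complex_of_real (sin a) * v$2"
   "(Rf a *v v) $ 2 = complex_of_real (sin a) * v$1 - complex_of_real (cos a) * v$2"
  by (simp_all add: Rf_def matrix_vector_mult_def sum_2)

lemma Ro_mv: "(Ro a *v v) $ 1 = complex_of_real (cos a) * v$1 - complex_of_real (sin a) * v$2"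
   "(Ro a *v v) $ 2 = complex_of_real (sin a) * v$1 + complex_of_real (cos a) * v$2"
  by (simp_all add: Ro_def matrix_vector_mult_def sum_2)

lemma fk_mem: "v \<in> form_ker a \<longleftrightarrow> a$1 * v$1 + a$2 * v$2 = 0"
  by (simp add: form_ker_def sum_2)

lemma half_equiv:
  fixes x y c s :: complex
  assumes cs: "c * c + s * s = 1"
  shows "((c * c - s * s) * x + 2 * s * c * y = x \<and> 2 * s * c * x - (c * c - s * s) * y = y) \<longleftrightarrow> s * x - c * y = 0"
proof
  assume h: "(c * c - s * s) * x + 2 * s * c * y = x \<and> 2 * s * c * x - (c * c - s * s) * y = y"
  have x: "x = (c * c + s * s) * x" using cs by simp
  have y: "y = (c * c + s * s) * y" using cs by simp
  have e1: "s * (s * x - c * y) = 0"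
  proof -
    have "(c * c - s * s) * x + 2 * s * c * y = (c * c + s * s) * x" using h x by simp
    then show ?thesis by (simp add: algebra_simps) (metis (no_types, lifting) add_diff_cancel_left' diff_add_cancel mult.assoc mult_2 nonzero_mult_div_cancel_left zero_neq_numeral)
  qed
  have e2: "c * (s * x - c * y) = 0"
  proof -
    have "2 * s * c * x - (c * c - s * s) * y = (c * c + s * s) * y" using h y by simp
    then show ?thesis by (simp add: algebra_simps)
  qed
  have "s * x - c * y = (c * c + s * s) * (s * x - c * y)" using cs by simp
  also have "\<dots> = s * (s * (s * x - c * y)) + c * (c * (s * x - c * y))" by (simp add: algebra_simps)
  also have "\<dots> = 0" by (simp only: e1 e2 mult_zero_right add_0)
  finally show "s * x - c * y = 0" .
next
  assume h: "s * x - c * y = 0"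
  then have sx: "s * x = c * y" by simp
  have "(c * c - s * s) * x + 2 * s * c * y = c * c * x - s * (s * x) + 2 * s * (c * y)" by (simp add: algebra_simps)
  also have "\<dots> = (c * c + s * s) * x" using sx by (simp add: algebra_simps)
  finally have 1: "(c * c - s * s) * x + 2 * s * c * y = x" using cs by simp
  have "2 * s * c * x - (c * c - s * s) * y = 2 * c * (s * x) - c * c * y + s * s * y" by (simp add: algebra_simps)
  also have "\<dots> = (c * c + s * s) * y" using sx by (simp add: algebra_simps)
  finally have 2: "2 * s * c * x - (c * c - s * s) * y = y" using cs by simp
  show "(c * c - s * s) * x + 2 * s * c * y = x \<and> 2 * s * c * x - (c * c - s * s) * y = y" using 1 2 by simp
qed

lemma Rf_refl: "is_reflection (Rf a)"
proof -
  define h where "h = a / 2"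
  have a: "a = 2 * h" by (simp add: h_def)
  define c where "c = complex_of_real (cos h)"
  define s where "s = complex_of_real (sin h)"
  have cs: "c * c + s * s = 1"
    unfolding c_def s_def by (simp flip: of_real_mult of_real_add add: sin_cos_squared_add3)
  have ca: "complex_of_real (cos a) = c * c - s * s"
    unfolding a c_def s_def cos_double by (simp add: power2_eq_square)
  have sa: "complex_of_real (sin a) = 2 * s * c"
    unfolding a c_def s_def sin_double by simp
  define nu :: cvec where "nu = (\<chi> i. if i = 1 then s else - c)"
  have nu1: "nu $ 1 = s" and nu2: "nu $ 2 = - c" by (simp_all add: nu_def)
  have "nu \<noteq> 0"
  proof
    assume "nu = 0"
    then have "s = 0" "c = 0" using nu1 nu2 by auto
    then show False using cs by simp
  qed
  moreover have "fixspace (Rf a) = form_ker nu"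
  proof (rule set_eqI)
    fix v :: cvec
    have "v \<in> fixspace (Rf a) \<longleftrightarrow>
      ((c * c - s * s) * v$1 + 2 * s * c * v$2 = v$1 \<and> 2 * s * c * v$1 - (c * c - s * s) * v$2 = v$2)"
      by (simp add: fixspace_def vec2_eq Rf_mv ca sa)
    also have "\<dots> \<longleftrightarrow> s * v$1 - c * v$2 = 0" by (rule half_equiv[OF cs])
    also have "\<dots> \<longleftrightarrow> v \<in> form_ker nu" by (simp add: fk_mem nu1 nu2)
    finally show "v \<in> fixspace (Rf a) \<longleftrightarrow> v \<in> form_ker nu" .
  qed
  ultimately show ?thesis unfolding is_reflection_def by blast
qed

lemma Ro_not_refl: "\<not> is_reflection (Ro a)"
proof
  assume "is_reflection (Ro a)"
  then obtain nu where nz: "nu \<noteq> 0" and fk: "fixspace (Ro a) = form_ker nu"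
    unfolding is_reflection_def by blast
  define c where "c = complex_of_real (cos a)"
  define s where "s = complex_of_real (sin a)"
  define v :: cvec where "v = (\<chi> i. if i = 1 then nu $ 2 else - nu $ 1)"
  have v1: "v $ 1 = nu $ 2" and v2: "v $ 2 = - nu $ 1" by (simp_all add: v_def)
  have "v \<noteq> 0"
  proof
    assume "v = 0"
    then have "nu $ 1 = 0" "nu $ 2 = 0" using v1 v2 by auto
    then have "nu = 0" by (simp add: vec2_eq)
    then show False using nz by simp
  qed
  then have vne: "v $ 1 \<noteq> 0 \<or> v $ 2 \<noteq> 0" by (auto simp: vec2_eq)
  have "v \<in> form_ker nu" by (simp add: fk_mem v1 v2 algebra_simps)
  then have "v \<in> fixspace (Ro a)" using fk by simp
  then have "Ro a *v v = v" by (simp add: fixspace_def)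
  then have e1: "(c - 1) * v$1 - s * v$2 = 0" and e2: "s * v$1 + (c - 1) * v$2 = 0"
    by (simp_all add: vec2_eq Ro_mv c_def s_def algebra_simps)
  have "((c - 1) * (c - 1) + s * s) * v$1 = (c - 1) * ((c - 1) * v$1 - s * v$2) + s * (s * v$1 + (c - 1) * v$2)"
    by (simp add: algebra_simps)
  then have f1: "((c - 1) * (c - 1) + s * s) * v$1 = 0" using e1 e2 by simp
  have "((c - 1) * (c - 1) + s * s) * v$2 = (c - 1) * (s * v$1 + (c - 1) * v$2) - s * ((c - 1) * v$1 - s * v$2)"
    by (simp add: algebra_simps)
  then have f2: "((c - 1) * (c - 1) + s * s) * v$2 = 0" using e1 e2 by simp
  have z: "(c - 1) * (c - 1) + s * s = 0" using f1 f2 vne by auto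
  have "complex_of_real ((cos a - 1) * (cos a - 1) + sin a * sin a) = 0"
    using z by (simp add: c_def s_def)
  then have "(cos a - 1) * (cos a - 1) + sin a * sin a = 0" by (simp only: of_real_eq_0_iff)
  then have "cos a = 1 \<and> sin a = 0" by (simp add: sum_squares_eq_zero_iff)
  then have "Ro a = mat 1" by (simp add: Ro_def mat_def vec_eq_iff forall_2)
  then have all: "\<And>u. u \<in> form_ker nu" using fk by (simp add: fixspace_def)
  show False
  proof (cases "nu $ 1 = 0")
    case True
    then have "nu $ 2 \<noteq> 0" using nz by (auto simp: vec2_eq)
    moreover have "((\<chi> i. if i = 1 then 0 else 1) :: cvec) \<in> form_ker nu" by (rule all)
    ultimately show False by (simp add: fk_mem)
  next
    case False
    moreover have "((\<chi> i. if i = 1 then 1 else 0) :: cvec) \<in> form_ker nu" by (rule all)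
    ultimately show False by (simp add: fk_mem)
  qed
qed

lemma refl_class: "t \<in> reflections m \<Longrightarrow> \<exists>k. t = Rf (ang m k)"
  unfolding reflections_def using coxW_class Ro_not_refl by blast

lemma Rf_reflections: "Rf (ang m k) \<in> reflections m"
  unfolding reflections_def using Rf_in Rf_refl by blast



lemma cspan_base: "f \<in> S \<Longrightarrow> f \<in> cspan S"
  unfolding cspan_def
  by (rule CollectI, rule exI[of _ "{f}"], rule exI[of _ "\<lambda>_. 1"]) auto

lemma cspan_add:
  assumes "f \<in> cspan S" "g \<in> cspan S"
  shows "(\<lambda>x. f x + g x) \<in> cspan S"
proof -
  obtain F1 c1 where F1: "finite F1" "F1 \<subseteq> S" "f = (\<lambda>x. \<Sum>h\<in>F1. c1 h * h x)"
    using assms(1) unfolding cspan_def by blast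
  obtain F2 c2 where F2: "finite F2" "F2 \<subseteq> S" "g = (\<lambda>x. \<Sum>h\<in>F2. c2 h * h x)"
    using assms(2) unfolding cspan_def by blast
  define c where "c h = (if h \<in> F1 then c1 h else 0) + (if h \<in> F2 then c2 h else 0)" for h
  have "(\<lambda>x. f x + g x) = (\<lambda>x. \<Sum>h\<in>F1 \<union> F2. c h * h x)"
  proof
    fix x
    have "(\<Sum>h\<in>F1 \<union> F2. c h * h x) =
       (\<Sum>h\<in>F1 \<union> F2. (if h \<in> F1 then c1 h * h x else 0) + (if h \<in> F2 then c2 h * h x else 0))"
      by (rule sum.cong) (simp_all add: c_def distrib_right)
    also have "\<dots> = (\<Sum>h\<in>F1 \<union> F2. (if h \<in> F1 then c1 h * h x else 0)) + (\<Sum>h\<in>F1 \<union> F2. (if h \<in> F2 then c2 h * h x else 0))"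
      by (rule sum.distrib)
    also have "\<dots> = (\<Sum>h\<in>(F1 \<union> F2) \<inter> F1. c1 h * h x) + (\<Sum>h\<in>(F1 \<union> F2) \<inter> F2. c2 h * h x)"
      using F1(1) F2(1) by (simp only: sum.inter_restrict finite_Un)
    also have "\<dots> = (\<Sum>h\<in>F1. c1 h * h x) + (\<Sum>h\<in>F2. c2 h * h x)"
      by (simp add: Int_absorb1)
    finally show "f x + g x = (\<Sum>h\<in>F1 \<union> F2. c h * h x)" using F1(3) F2(3) by simp
  qed
  then show ?thesis unfolding cspan_def using F1 F2 by blast
qed

lemma cspan_smult:
  assumes "f \<in> cspan S"
  shows "(\<lambda>x. a * f x) \<in> cspan S"
proof -
  obtain F c where F: "finite F" "F \<subseteq> S" "f = (\<lambda>x. \<Sum>h\<in>F. c h * h x)"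
    using assms unfolding cspan_def by blast
  have "(\<lambda>x. a * f x) = (\<lambda>x. \<Sum>h\<in>F. (a * c h) * h x)"
    unfolding F(3) by (simp add: sum_distrib_left mult.assoc)
  then show ?thesis unfolding cspan_def
    by (intro CollectI exI[of _ F] exI[of _ "\<lambda>h. a * c h"] conjI F(1) F(2))
qed

lemma cspan_diff:
  assumes "f \<in> cspan S" "g \<in> cspan S"
  shows "(\<lambda>x. f x - g x) \<in> cspan S"
proof -
  have h: "(\<lambda>x. (-1) * g x) \<in> cspan S" by (rule cspan_smult[OF assms(2)])
  have eq: "(\<lambda>x. f x + (-1) * g x) = (\<lambda>x. f x - g x)" by (rule ext) simp
  from cspan_add[OF assms(1) h] show ?thesis unfolding eq .
qed

lemma gen_ideal: "r \<in> OS_gens m \<Longrightarrow> r \<in> OS_ideal m"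
proof -
  assume r: "r \<in> OS_gens m"
  have "wmul [] r [] = r" by (simp add: wmul_def)
  then have "r \<in> {wmul u r v | u r v. u \<in> lists (reflections m) \<and>
      v \<in> lists (reflections m) \<and> r \<in> OS_gens m}" using r
    by (intro CollectI exI[of _ "[]"] exI[of _ r] conjI) simp_all
  then show ?thesis unfolding OS_ideal_def by (rule cspan_base)
qed

lemma anti_ideal: "t \<in> reflections m \<Longrightarrow> t' \<in> reflections m \<Longrightarrow>
   (\<lambda>x. wd [t, t'] x + wd [t', t] x) \<in> OS_ideal m"
  unfolding OS_gens_def
  by (rule gen_ideal, unfold OS_gens_def, rule UnI1, intro CollectI exI[of _ t] exI[of _ t'] conjI refl)

lemma comb_eq: "(c0 *s a0 + c1 *s a1 + c2 *s a2 = (0::cvec)) \<longleftrightarrow>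
   (c0 * a0$1 + c1 * a1$1 + c2 * a2$1 = 0 \<and> c0 * a0$2 + c1 * a1$2 + c2 * a2$2 = 0)"
  by (simp only: vec2_eq vector_add_component vector_smult_component zero_index)

lemma ex3: "(c0 \<noteq> 0 \<or> c1 \<noteq> 0 \<or> c2 \<noteq> 0) \<Longrightarrow> c0 *s a0 + c1 *s a1 + c2 *s a2 = (0::cvec) \<Longrightarrow>
   \<exists>c0 c1 c2. (c0 \<noteq> 0 \<or> c1 \<noteq> 0 \<or> c2 \<noteq> 0) \<and> c0 *s a0 + c1 *s a1 + c2 *s a2 = 0"
  apply (rule exI, rule exI, rule exI, rule conjI)
   apply assumption
  apply assumption
  done

lemma dep_core:
  fixes a0 a1 a2 :: cvec
  assumes "a0 \<noteq> 0"
  shows "\<exists>c0 c1 c2. (c0 \<noteq> 0 \<or> c1 \<noteq> 0 \<or> c2 \<noteq> 0) \<and> c0 *s a0 + c1 *s a1 + c2 *s a2 = 0"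
proof (cases "a0$1 * a1$2 - a0$2 * a1$1 = 0")
  case False
  have "(a1$1 * a2$2 - a1$2 * a2$1) *s a0 + (- (a0$1 * a2$2 - a0$2 * a2$1)) *s a1 + (a0$1 * a1$2 - a0$2 * a1$1) *s a2 = 0"
    unfolding comb_eq by (simp add: algebra_simps)
  then show ?thesis by (rule ex3[rotated]) (use False in simp)
next
  case True
  show ?thesis
  proof (cases "a0$1 = 0")
    case False
    have c1: "a1$1 * a0$1 + (- a0$1) * a1$1 + 0 * a2$1 = 0" by (simp add: algebra_simps)
    have "a1$1 * a0$2 + (- a0$1) * a1$2 + 0 * a2$2 = - (a0$1 * a1$2 - a0$2 * a1$1)" by (simp add: algebra_simps)
    also have "\<dots> = 0" by (simp only: True neg_0_equal_iff_equal minus_zero)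
    finally have "a1$1 *s a0 + (- a0$1) *s a1 + 0 *s a2 = 0"
      unfolding comb_eq using c1 by blast
    then show ?thesis by (rule ex3[rotated]) (use False in simp)
  next
    case z: True
    then have nz: "a0$2 \<noteq> 0" using assms by (auto simp: vec2_eq)
    have c2: "a1$2 * a0$2 + (- a0$2) * a1$2 + 0 * a2$2 = 0" by (simp add: algebra_simps)
    have "a1$2 * a0$1 + (- a0$2) * a1$1 + 0 * a2$1 = a0$1 * a1$2 - a0$2 * a1$1" by (simp add: algebra_simps)
    also have "\<dots> = 0" by (rule True)
    finally have "a1$2 *s a0 + (- a0$2) *s a1 + 0 *s a2 = 0"
      unfolding comb_eq using c2 by blast
    then show ?thesis by (rule ex3[rotated]) (use nz in simp)
  qed
qed

lemma lt3: "{..<3::nat} = {0,1,2}" by auto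

lemma dep3:
  assumes "a0 \<noteq> 0" "a1 \<noteq> 0" "a2 \<noteq> 0"
  shows "hyps_dependent [form_ker a0, form_ker a1, form_ker a2]"
proof -
  obtain c0 c1 c2 where c: "c0 \<noteq> 0 \<or> c1 \<noteq> 0 \<or> c2 \<noteq> 0" "c0 *s a0 + c1 *s a1 + c2 *s a2 = 0"
    using dep_core[OF assms(1)] by blast
  define a where "a i = [a0, a1, a2] ! i" for i
  define cc where "cc i = [c0, c1, c2] ! i" for i
  have len: "length [form_ker a0, form_ker a1, form_ker a2] = 3" by simp
  have A: "\<forall>i<3. a i \<noteq> 0 \<and> [form_ker a0, form_ker a1, form_ker a2] ! i = form_ker (a i)"
  proof (intro allI impI)
    fix i :: nat assume "i < 3"
    then have "i = 0 \<or> i = 1 \<or> i = 2" by arith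
    then show "a i \<noteq> 0 \<and> [form_ker a0, form_ker a1, form_ker a2] ! i = form_ker (a i)"
      using assms by (elim disjE) (simp_all add: a_def numeral_2_eq_2)
  qed
  have B: "\<exists>i<3. cc i \<noteq> 0"
    using c(1)
  proof (elim disjE)
    assume "c0 \<noteq> 0" then show ?thesis by (intro exI[of _ 0]) (simp add: cc_def)
  next
    assume "c1 \<noteq> 0" then show ?thesis by (intro exI[of _ 1]) (simp add: cc_def)
  next
    assume "c2 \<noteq> 0" then show ?thesis by (intro exI[of _ 2]) (simp add: cc_def numeral_2_eq_2)
  qed
  have "(\<Sum>i<3. cc i *s a i) = cc 0 *s a 0 + cc 1 *s a 1 + cc 2 *s a 2"
    by (simp add: lt3)
  also have "\<dots> = c0 *s a0 + c1 *s a1 + c2 *s a2"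
    by (simp add: a_def cc_def numeral_2_eq_2)
  finally have C: "(\<Sum>i<3. cc i *s a i) = 0" using c(2) by simp
  show ?thesis unfolding hyps_dependent_def len
    by (rule exI[of _ a], rule exI[of _ cc]) (use A B C in blast)
qed

lemma rel3_ideal:
  assumes "t1 \<in> reflections m" "t2 \<in> reflections m" "t3 \<in> reflections m"
  shows "os_rel [t1, t2, t3] \<in> OS_ideal m"
proof -
  have ex: "\<exists>a. a \<noteq> 0 \<and> fixspace t = form_ker a" if "t \<in> reflections m" for t
    using that unfolding reflections_def is_reflection_def by blast
  obtain a1 where 1: "a1 \<noteq> 0" "fixspace t1 = form_ker a1" using ex assms(1) by blast
  obtain a2 where 2: "a2 \<noteq> 0" "fixspace t2 = form_ker a2" using ex assms(2) by blast
  obtain a3 where 3: "a3 \<noteq> 0" "fixspace t3 = form_ker a3" using ex assms(3) by blast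
  have "map fixspace [t1, t2, t3] = [form_ker a1, form_ker a2, form_ker a3]"
    using 1 2 3 by simp
  then have dep: "hyps_dependent (map fixspace [t1, t2, t3])"
    using dep3[OF 1(1) 2(1) 3(1)] by simp
  have sub: "set [t1, t2, t3] \<subseteq> reflections m" using assms by simp
  show ?thesis
    by (rule gen_ideal, unfold OS_gens_def, rule UnI2, intro CollectI exI[of _ "[t1, t2, t3]"] conjI refl sub dep)
qed

lemma os_rel3: "os_rel [a, b, c] = (\<lambda>x. - wd [b, c] x + wd [a, c] x - wd [a, b] x)"
  by (simp add: os_rel_def lt3 numeral_2_eq_2)


definition Gs :: "nat \<Rightarrow> (cmat list \<Rightarrow> complex) set" where
  "Gs m = {wd [w' ** refl_s ** w, w' ** refl_t m ** w] | w w'.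
        w \<in> coxW m \<and> w' \<in> coxW m \<and> w' ** w = mat 1}"

lemma gen_M: "w \<in> coxW m \<Longrightarrow> w' \<in> coxW m \<Longrightarrow> w' ** w = mat 1 \<Longrightarrow>
   wd [w' ** refl_s ** w, w' ** refl_t m ** w] \<in> cspan (Gs m \<union> OS_ideal m)"
  by (rule cspan_base, rule UnI1, unfold Gs_def, intro CollectI exI[of _ w] exI[of _ w'] conjI refl)

lemma ideal_M: "f \<in> OS_ideal m \<Longrightarrow> f \<in> cspan (Gs m \<union> OS_ideal m)"
  by (rule cspan_base, rule UnI2)

lemma even_M: "wd [Rf (ang m (2*i)), Rf (ang m (2*i+1))] \<in> cspan (Gs m \<union> OS_ideal m)"
proof -
  let ?w = "Ro (ang m (-i))" and ?w' = "Ro (ang m i)"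
  have a1: "ang m i + 0 - ang m (- i) = ang m (2*i)"
    by (subst (1 2 3) ang_lin) (simp add: algebra_simps)
  have e1: "?w' ** refl_s ** ?w = Rf (ang m (2*i))" unfolding s_eq RoR RRo a1 ..
  have a2: "ang m i + ang m 1 - ang m (- i) = ang m (2*i+1)"
    by (subst (1 2 3) ang_lin) (simp add: algebra_simps)
  have e2: "?w' ** refl_t m ** ?w = Rf (ang m (2*i+1))" unfolding t_eq ang_1[symmetric] RoR RRo a2 ..
  have a3: "ang m i + ang m (- i) = 0" by (simp add: ang_uminus)
  have e3: "?w' ** ?w = mat 1" unfolding RoRo a3 Ro0 ..
  show ?thesis using gen_M[OF Ro_in Ro_in e3] unfolding e1 e2 .
qed

lemma odd_M: "wd [Rf (ang m (2*j)), Rf (ang m (2*j-1))] \<in> cspan (Gs m \<union> OS_ideal m)"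
proof -
  let ?w = "Rf (ang m j)"
  have a1: "ang m j - 0 + ang m j = ang m (2*j)"
    by (subst (1 2 3) ang_lin) (simp add: algebra_simps)
  have e1: "?w ** refl_s ** ?w = Rf (ang m (2*j))" unfolding s_eq RR RoR a1 ..
  have a2: "ang m j - ang m 1 + ang m j = ang m (2*j-1)"
    by (subst (1 2 3) ang_lin) (simp add: algebra_simps)
  have e2: "?w ** refl_t m ** ?w = Rf (ang m (2*j-1))" unfolding t_eq ang_1[symmetric] RR RoR a2 ..
  have a3: "ang m j - ang m j = 0" by simp
  have e3: "?w ** ?w = mat 1" unfolding RR a3 Ro0 ..
  show ?thesis using gen_M[OF Rf_in Rf_in e3] unfolding e1 e2 .
qed

lemma swap_M:
  assumes "a \<in> reflections m" "b \<in> reflections m" "wd [a, b] \<in> cspan (Gs m \<union> OS_ideal m)"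
  shows "wd [b, a] \<in> cspan (Gs m \<union> OS_ideal m)"
proof -
  have "(\<lambda>x. (wd [a, b] x + wd [b, a] x) - wd [a, b] x) \<in> cspan (Gs m \<union> OS_ideal m)"
    by (rule cspan_diff[OF ideal_M[OF anti_ideal[OF assms(1,2)]] assms(3)])
  moreover have "(\<lambda>x. (wd [a, b] x + wd [b, a] x) - wd [a, b] x) = wd [b, a]" by (rule ext) simp
  ultimately show ?thesis by simp
qed

lemma adj_M: "wd [Rf (ang m k), Rf (ang m (k+1))] \<in> cspan (Gs m \<union> OS_ideal m)"
proof -
  have "k = 2 * (k div 2) \<or> k = 2 * ((k + 1) div 2) - 1" by presburger
  then show ?thesis
  proof
    assume h: "k = 2 * (k div 2)"
    define i where "i = k div 2"
    have k: "k = 2 * i" using h unfolding i_def .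
    show ?thesis unfolding k by (rule even_M)
  next
    assume h: "k = 2 * ((k + 1) div 2) - 1"
    define j where "j = (k + 1) div 2"
    have k: "k = 2 * j - 1" using h unfolding j_def .
    have k1: "k + 1 = 2 * j" using h unfolding j_def by linarith
    show ?thesis unfolding k1 unfolding k
      by (rule swap_M[OF Rf_reflections Rf_reflections odd_M])
  qed
qed

lemma chain_M: "wd [Rf (ang m i), Rf (ang m (i + int n))] \<in> cspan (Gs m \<union> OS_ideal m)"
proof (induction n)
  case 0
  let ?a = "Rf (ang m i)"
  have mem: "(\<lambda>x. (1/2) * (wd [?a, ?a] x + wd [?a, ?a] x)) \<in> cspan (Gs m \<union> OS_ideal m)"
    by (rule cspan_smult[OF ideal_M[OF anti_ideal[OF Rf_reflections Rf_reflections]]])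
  have eq: "(\<lambda>x. (1/2) * (wd [?a, ?a] x + wd [?a, ?a] x)) = wd [?a, ?a]" by (rule ext) simp
  have z: "i + int 0 = i" by simp
  show ?case unfolding z using mem unfolding eq .
next
  case (Suc n)
  let ?a = "Rf (ang m i)" and ?b = "Rf (ang m (i + int n))" and ?c = "Rf (ang m (i + int n + 1))"
  have os: "os_rel [?a, ?b, ?c] \<in> cspan (Gs m \<union> OS_ideal m)"
    by (rule ideal_M[OF rel3_ideal[OF Rf_reflections Rf_reflections Rf_reflections]])
  have bc: "wd [?b, ?c] \<in> cspan (Gs m \<union> OS_ideal m)" by (rule adj_M)
  have mem: "(\<lambda>x. (os_rel [?a, ?b, ?c] x + wd [?b, ?c] x) + wd [?a, ?b] x) \<in> cspan (Gs m \<union> OS_ideal m)"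
    by (rule cspan_add[OF cspan_add[OF os bc] Suc.IH])
  have eq: "(\<lambda>x. (os_rel [?a, ?b, ?c] x + wd [?b, ?c] x) + wd [?a, ?b] x) = wd [?a, ?c]"
    by (rule ext) (simp add: os_rel3)
  have e: "i + int (Suc n) = i + int n + 1" by simp
  show ?case unfolding e using mem unfolding eq .
qed

lemma main_M:
  assumes "t1 \<in> reflections m" "t2 \<in> reflections m"
  shows "wd [t1, t2] \<in> cspan (Gs m \<union> OS_ideal m)"
proof -
  obtain i where i: "t1 = Rf (ang m i)" using refl_class[OF assms(1)] by blast
  obtain j where j: "t2 = Rf (ang m j)" using refl_class[OF assms(2)] by blast
  show ?thesis
  proof (cases "i \<le> j")
    case True
    then have e: "i + int (nat (j - i)) = j" by simp
    show ?thesis unfolding i j using chain_M[of m i "nat (j - i)"] unfolding e .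
  next
    case False
    then have e: "j + int (nat (i - j)) = i" by simp
    have "wd [t2, t1] \<in> cspan (Gs m \<union> OS_ideal m)"
      unfolding i j using chain_M[of m j "nat (i - j)"] unfolding e .
    then show ?thesis by (rule swap_M[OF assms(2,1)])
  qed
qed

theorem lemma5p9:
  fixes m :: nat
  assumes "2 \<le> m"
  shows "\<forall>t1 \<in> reflections m. \<forall>t2 \<in> reflections m.
    wd [t1, t2] \<in> cspan ({wd [w' ** refl_s ** w, w' ** refl_t m ** w] | w w'.
        w \<in> coxW m \<and> w' \<in> coxW m \<and> w' ** w = mat 1} \<union> OS_ideal m)"
  by (intro ballI) (rule main_M[unfolded Gs_def])

end
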